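(* For every $F_{\mathrm{total}}\ge0$, the optimal value of problem (P4) is at least $T^{\lim}=\max\left\{\frac{\sum_{u=1}^U D_u/r_u}{B_{\mathrm{total}}},\ \frac{\sum_{u=1}^U\zeta_uD_u}{R^S_{\mathrm{total}}}\right\}$. Consequently, for any threshold $T^{\mathrm{th}}<T^{\lim}$ there is no choice of $F_{\mathrm{total}}\ge0$ for which problem (P4) has a feasible point with $T\le T^{\mathrm{th}}$; and if $T^{\mathrm{th}}\ge T^{\lim}$, then choosing $F_{\mathrm{total}}=F^{\lim}_{\mathrm{total}}:=\left(\sum_{u=1}^U\rho_uD_u\right)\min\left\{\frac{B_{\mathrm{total}}}{\sum_{u} D_u/r_u},\frac{R^S_{\mathrm{total}}}{\sum_{u}\zeta_uD_u}\right\}$ yields optimal value $T^{\lim}\le T^{\mathrm{th}}$, and every $F_{\mathrm{total}}\ge F^{\lim}_{\mathrm{total}}$ yields exactly the optimal value $T^{\lim}$.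
   Context: Users $u=1,\dots,U$ have constants $D_u>0$, $r_u>0$, $\rho_u>0$, $\zeta_u\in(0,1)$; $B_{\mathrm{total}}>0$, $R^S_{\mathrm{total}}>0$, $F_{\mathrm{total}}\ge0$. Problem (P4): minimize $T$ over $T\ge0$, $B_u\ge0$, $R_u^S\ge0$ ($u=1,\dots,U$) subject to $T\ge\frac{D_u}{B_ur_u}$ for all $u$ (infeasible if $B_u=0$), $\sum_uB_u\le B_{\mathrm{total}}$, $\sum_uR_u^S\le R^S_{\mathrm{total}}$, $\sum_u\rho_u\frac{B_ur_u-R_u^S}{1-\zeta_u}\le F_{\mathrm{total}}$, and $R_u^S\le B_ur_u\le\frac{R_u^S}{\zeta_u}$ for all $u$. *)

theory Defs
  imports Complex_Main
begin

text \<open>A feasible point of problem (P4) with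
  parameter Ftot is a tuple (T, B, RS) satisfying all constraints; B u = 0 is infeasible
  because of the latency constraint T \<ge> D u / (B u * r u).\<close>

definition P4_feasible ::
  "nat \<Rightarrow> (nat \<Rightarrow> real) \<Rightarrow> (nat \<Rightarrow> real) \<Rightarrow> (nat \<Rightarrow> real) \<Rightarrow> (nat \<Rightarrow> real)
   \<Rightarrow> real \<Rightarrow> real \<Rightarrow> real \<Rightarrow> real \<Rightarrow> (nat \<Rightarrow> real) \<Rightarrow> (nat \<Rightarrow> real) \<Rightarrow> bool" where
  "P4_feasible U D r \<rho> \<zeta> Btot Rtot Ftot T B RS \<longleftrightarrow>
     T \<ge> 0 \<and>
     (\<forall>u\<in>{1..U}. B u > 0 \<and> RS u \<ge> 0 \<and> T \<ge> D u / (B u * r u)) \<and>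
     (\<Sum>u=1..U. B u) \<le> Btot \<and>
     (\<Sum>u=1..U. RS u) \<le> Rtot \<and>
     (\<Sum>u=1..U. \<rho> u * (B u * r u - RS u) / (1 - \<zeta> u)) \<le> Ftot \<and>
     (\<forall>u\<in>{1..U}. RS u \<le> B u * r u \<and> B u * r u \<le> RS u / \<zeta> u)"

definition P4_optval ::
  "nat \<Rightarrow> (nat \<Rightarrow> real) \<Rightarrow> (nat \<Rightarrow> real) \<Rightarrow> (nat \<Rightarrow> real) \<Rightarrow> (nat \<Rightarrow> real)
   \<Rightarrow> real \<Rightarrow> real \<Rightarrow> real \<Rightarrow> real" where
  "P4_optval U D r \<rho> \<zeta> Btot Rtot Ftot =
     Inf {T. \<exists>B RS. P4_feasible U D r \<rho> \<zeta> Btot Rtot Ftot T B RS}"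

definition T_lim :: "nat \<Rightarrow> (nat \<Rightarrow> real) \<Rightarrow> (nat \<Rightarrow> real) \<Rightarrow> (nat \<Rightarrow> real) \<Rightarrow> real \<Rightarrow> real \<Rightarrow> real" where
  "T_lim U D r \<zeta> Btot Rtot =
     max ((\<Sum>u=1..U. D u / r u) / Btot) ((\<Sum>u=1..U. \<zeta> u * D u) / Rtot)"

definition F_lim :: "nat \<Rightarrow> (nat \<Rightarrow> real) \<Rightarrow> (nat \<Rightarrow> real) \<Rightarrow> (nat \<Rightarrow> real) \<Rightarrow> (nat \<Rightarrow> real)
   \<Rightarrow> real \<Rightarrow> real \<Rightarrow> real" where
  "F_lim U D r \<rho> \<zeta> Btot Rtot =
     (\<Sum>u=1..U. \<rho> u * D u) *
       min (Btot / (\<Sum>u=1..U. D u / r u)) (Rtot / (\<Sum>u=1..U. \<zeta> u * D u))"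

end

theory Submission
  imports Defs
begin

lemma lowerb:
  fixes U :: nat and D r \<rho> \<zeta> :: "nat \<Rightarrow> real" and Btot Rtot :: real
  assumes U: "U \<ge> 1"
    and D: "\<And>u. u \<in> {1..U} \<Longrightarrow> D u > 0"
    and r: "\<And>u. u \<in> {1..U} \<Longrightarrow> r u > 0"
    and z: "\<And>u. u \<in> {1..U} \<Longrightarrow> 0 < \<zeta> u \<and> \<zeta> u < 1"
    and Bp: "Btot > 0" and Rp: "Rtot > 0"
    and f: "P4_feasible U D r \<rho> \<zeta> Btot Rtot Ftot T B RS"
  shows "T_lim U D r \<zeta> Btot Rtot \<le> T"
proof -
  from f have Bpos: "\<And>u. u \<in> {1..U} \<Longrightarrow> B u > 0 \<and> RS u \<ge> 0 \<and> T \<ge> D u / (B u * r u)"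
    and sB: "(\<Sum>u=1..U. B u) \<le> Btot" and sR: "(\<Sum>u=1..U. RS u) \<le> Rtot"
    and c: "\<And>u. u \<in> {1..U} \<Longrightarrow> RS u \<le> B u * r u \<and> B u * r u \<le> RS u / \<zeta> u"
    unfolding P4_feasible_def by auto
  have 1: "D u / r u \<le> T * B u" if "u \<in> {1..U}" for u
  proof -
    have "D u / (B u * r u) \<le> T" using Bpos[OF that] by auto
    then have "D u \<le> T * (B u * r u)" using Bpos[OF that] r[OF that]
      by (simp add: divide_le_eq mult_pos_pos)
    then show ?thesis using r[OF that] by (simp add: divide_le_eq mult.commute mult.left_commute)
  qed
  have 2: "\<zeta> u * D u \<le> T * RS u" if "u \<in> {1..U}" for u
  proof -
    have "D u / (B u * r u) \<le> T" using Bpos[OF that] by auto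
    then have a: "D u \<le> T * (B u * r u)" using Bpos[OF that] r[OF that]
      by (simp add: divide_le_eq mult_pos_pos)
    have "\<zeta> u * (B u * r u) \<le> RS u" using c[OF that] z[OF that]
      by (simp add: le_divide_eq mult.commute)
    moreover have T0: "T \<ge> 0" using f unfolding P4_feasible_def by auto
    ultimately have "T * (\<zeta> u * (B u * r u)) \<le> T * RS u" by (simp add: mult_left_mono)
    moreover have "\<zeta> u * D u \<le> \<zeta> u * (T * (B u * r u))" using a z[OF that] by simp
    ultimately show ?thesis by (simp add: algebra_simps)
  qed
  have T0: "T \<ge> 0" using f unfolding P4_feasible_def by auto
  have s1: "(\<Sum>u=1..U. D u / r u) \<le> T * Btot"
  proof -
    have "(\<Sum>u=1..U. D u / r u) \<le> (\<Sum>u=1..U. T * B u)" by (rule sum_mono) (use 1 in auto)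
    also have "\<dots> = T * (\<Sum>u=1..U. B u)" by (simp add: sum_distrib_left)
    also have "\<dots> \<le> T * Btot" using sB T0 by (simp add: mult_left_mono)
    finally show ?thesis .
  qed
  have s2: "(\<Sum>u=1..U. \<zeta> u * D u) \<le> T * Rtot"
  proof -
    have "(\<Sum>u=1..U. \<zeta> u * D u) \<le> (\<Sum>u=1..U. T * RS u)" by (rule sum_mono) (use 2 in auto)
    also have "\<dots> = T * (\<Sum>u=1..U. RS u)" by (simp add: sum_distrib_left)
    also have "\<dots> \<le> T * Rtot" using sR T0 by (simp add: mult_left_mono)
    finally show ?thesis .
  qed
  show ?thesis unfolding T_lim_def using s1 s2 Bp Rp by (simp add: divide_le_eq)
qed

lemma feas_point:
  fixes U :: nat and D r \<rho> \<zeta> :: "nat \<Rightarrow> real" and Btot Rtot :: real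
  assumes U: "U \<ge> 1"
    and D: "\<And>u. u \<in> {1..U} \<Longrightarrow> D u > 0"
    and r: "\<And>u. u \<in> {1..U} \<Longrightarrow> r u > 0"
    and rho: "\<And>u. u \<in> {1..U} \<Longrightarrow> \<rho> u > 0"
    and z: "\<And>u. u \<in> {1..U} \<Longrightarrow> 0 < \<zeta> u \<and> \<zeta> u < 1"
    and Bp: "Btot > 0" and Rp: "Rtot > 0"
    and F: "Ftot \<ge> F_lim U D r \<rho> \<zeta> Btot Rtot"
  shows "P4_feasible U D r \<rho> \<zeta> Btot Rtot Ftot (T_lim U D r \<zeta> Btot Rtot)
     (\<lambda>u. D u / (r u * T_lim U D r \<zeta> Btot Rtot)) (\<lambda>u. \<zeta> u * D u / T_lim U D r \<zeta> Btot Rtot)"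
proof -
  define T where "T = T_lim U D r \<zeta> Btot Rtot"
  define S1 where "S1 = (\<Sum>u=1..U. D u / r u)"
  define S2 where "S2 = (\<Sum>u=1..U. \<zeta> u * D u)"
  define S3 where "S3 = (\<Sum>u=1..U. \<rho> u * D u)"
  have ne: "1 \<in> {1..U}" using U by auto
  have S1p: "S1 > 0" unfolding S1_def
    by (rule sum_pos) (use D r ne in auto)
  have S2p: "S2 > 0" unfolding S2_def
    by (rule sum_pos) (use D z ne in auto)
  have S3p: "S3 > 0" unfolding S3_def
    by (rule sum_pos) (use D rho ne in auto)
  have Tdef: "T = max (S1/Btot) (S2/Rtot)" unfolding T_def T_lim_def S1_def S2_def by simp
  have Tp: "T > 0" using Tdef S1p Bp by (simp add: less_max_iff_disj)
  have T1: "S1 / Btot \<le> T" and T2: "S2/Rtot \<le> T" using Tdef by auto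
  have Fl: "F_lim U D r \<rho> \<zeta> Btot Rtot = S3 / T"
  proof -
    have "min (Btot / S1) (Rtot / S2) = 1 / T"
    proof (cases "S1/Btot \<le> S2/Rtot")
      case True
      then have "Rtot / S2 \<le> Btot / S1" using S1p S2p Bp Rp
        by (simp add: divide_le_eq le_divide_eq field_simps)
      then show ?thesis using True Tdef by (simp add: min_def)
    next
      case False
      then have "Btot / S1 \<le> Rtot / S2" using S1p S2p Bp Rp
        by (simp add: divide_le_eq le_divide_eq field_simps)
      then show ?thesis using False Tdef by (simp add: min_def)
    qed
    then show ?thesis unfolding F_lim_def S1_def[symmetric] S2_def[symmetric] S3_def[symmetric]
      by simp
  qed
  have eqF: "(\<Sum>u=1..U. \<rho> u * (D u / (r u * T) * r u - \<zeta> u * D u / T) / (1 - \<zeta> u)) = S3 / T"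
  proof -
    have "(\<Sum>u=1..U. \<rho> u * (D u / (r u * T) * r u - \<zeta> u * D u / T) / (1 - \<zeta> u))
        = (\<Sum>u=1..U. \<rho> u * D u / T)"
    proof (rule sum.cong)
      fix u assume u: "u \<in> {1..U}"
      have "r u \<noteq> 0" "1 - \<zeta> u \<noteq> 0" using r[OF u] z[OF u] by auto
      then show "\<rho> u * (D u / (r u * T) * r u - \<zeta> u * D u / T) / (1 - \<zeta> u) = \<rho> u * D u / T"
        using Tp by (simp add: field_simps)
    qed simp
    also have "\<dots> = S3 / T" unfolding S3_def by (simp add: sum_divide_distrib)
    finally show ?thesis .
  qed
  have sB: "(\<Sum>u=1..U. D u / (r u * T)) \<le> Btot"
  proof -
    have "(\<Sum>u=1..U. D u / (r u * T)) = S1 / T" unfolding S1_def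
      by (simp add: sum_divide_distrib)
    also have "\<dots> \<le> Btot" using T1 Tp Bp by (simp add: divide_le_eq mult.commute)
    finally show ?thesis .
  qed
  have sR: "(\<Sum>u=1..U. \<zeta> u * D u / T) \<le> Rtot"
  proof -
    have "(\<Sum>u=1..U. \<zeta> u * D u / T) = S2 / T" unfolding S2_def
      by (simp add: sum_divide_distrib)
    also have "\<dots> \<le> Rtot" using T2 Tp Rp by (simp add: divide_le_eq mult.commute)
    finally show ?thesis .
  qed
  have pt: "\<forall>u\<in>{1..U}. D u / (r u * T) > 0 \<and> \<zeta> u * D u / T \<ge> 0
      \<and> T \<ge> D u / (D u / (r u * T) * r u)"
  proof
    fix u assume u: "u \<in> {1..U}"
    have ee: "D u / (r u * T) * r u = D u / T" using r[OF u] Tp by (simp add: field_simps)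
    show "D u / (r u * T) > 0 \<and> \<zeta> u * D u / T \<ge> 0
      \<and> T \<ge> D u / (D u / (r u * T) * r u)"
      unfolding ee using D[OF u] r[OF u] z[OF u] Tp by simp
  qed
  have pt2: "\<forall>u\<in>{1..U}. \<zeta> u * D u / T \<le> D u / (r u * T) * r u
      \<and> D u / (r u * T) * r u \<le> (\<zeta> u * D u / T) / \<zeta> u"
  proof
    fix u assume u: "u \<in> {1..U}"
    have "r u \<noteq> 0" "\<zeta> u \<noteq> 0" using r[OF u] z[OF u] by auto
    then have e1: "D u / (r u * T) * r u = D u / T" and e2: "(\<zeta> u * D u / T) / \<zeta> u = D u / T"
      by (auto simp: field_simps)
    have "\<zeta> u * D u / T \<le> D u / T" using z[OF u] D[OF u] Tp
      by (simp add: divide_right_mono)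
    then show "\<zeta> u * D u / T \<le> D u / (r u * T) * r u
      \<and> D u / (r u * T) * r u \<le> (\<zeta> u * D u / T) / \<zeta> u" using e1 e2 by simp
  qed
  show ?thesis unfolding P4_feasible_def T_def[symmetric]
    using Tp pt sB sR pt2 eqF Fl F by auto
qed

lemma feas0:
  fixes U :: nat and D r \<rho> \<zeta> :: "nat \<Rightarrow> real" and Btot Rtot :: real
  assumes U: "U \<ge> 1"
    and D: "\<And>u. u \<in> {1..U} \<Longrightarrow> D u > 0"
    and r: "\<And>u. u \<in> {1..U} \<Longrightarrow> r u > 0"
    and z: "\<And>u. u \<in> {1..U} \<Longrightarrow> 0 < \<zeta> u \<and> \<zeta> u < 1"
    and Bp: "Btot > 0" and Rp: "Rtot > 0"
    and F: "Ftot \<ge> 0"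
  shows "\<exists>T B RS. P4_feasible U D r \<rho> \<zeta> Btot Rtot Ftot T B RS"
proof -
  define S1 where "S1 = (\<Sum>u=1..U. D u / r u)"
  define S4 where "S4 = (\<Sum>u=1..U. D u)"
  define T where "T = max (S1/Btot) (S4/Rtot)"
  have ne: "1 \<in> {1..U}" using U by auto
  have S1p: "S1 > 0" unfolding S1_def
    by (rule sum_pos) (use D r ne in auto)
  have S4p: "S4 > 0" unfolding S4_def
    by (rule sum_pos) (use D ne in auto)
  have Tp: "T > 0" using S1p Bp by (simp add: T_def less_max_iff_disj)
  have T1: "S1 / Btot \<le> T" and T2: "S4/Rtot \<le> T" using T_def by auto
  have sB: "(\<Sum>u=1..U. D u / (r u * T)) \<le> Btot"
  proof -
    have "(\<Sum>u=1..U. D u / (r u * T)) = S1 / T" unfolding S1_def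
      by (simp add: sum_divide_distrib)
    also have "\<dots> \<le> Btot" using T1 Tp Bp by (simp add: divide_le_eq mult.commute)
    finally show ?thesis .
  qed
  have sR: "(\<Sum>u=1..U. D u / T) \<le> Rtot"
  proof -
    have "(\<Sum>u=1..U. D u / T) = S4 / T" unfolding S4_def
      by (simp add: sum_divide_distrib)
    also have "\<dots> \<le> Rtot" using T2 Tp Rp by (simp add: divide_le_eq mult.commute)
    finally show ?thesis .
  qed
  have e: "D u / (r u * T) * r u = D u / T" if u: "u \<in> {1..U}" for u
  proof -
    have "r u \<noteq> 0" using r[OF u] by auto
    then show ?thesis using Tp by (simp add: field_simps)
  qed
  have sF: "(\<Sum>u=1..U. \<rho> u * (D u / (r u * T) * r u - D u / T) / (1 - \<zeta> u)) = 0"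
    by (rule sum.neutral) (use e in auto)
  have pt: "\<forall>u\<in>{1..U}. D u / (r u * T) > 0 \<and> D u / T \<ge> 0
      \<and> T \<ge> D u / (D u / (r u * T) * r u)"
  proof
    fix u assume u: "u \<in> {1..U}"
    show "D u / (r u * T) > 0 \<and> D u / T \<ge> 0
      \<and> T \<ge> D u / (D u / (r u * T) * r u)"
      unfolding e[OF u] using D[OF u] r[OF u] Tp by simp
  qed
  have pt2: "\<forall>u\<in>{1..U}. D u / T \<le> D u / (r u * T) * r u
      \<and> D u / (r u * T) * r u \<le> (D u / T) / \<zeta> u"
  proof
    fix u assume u: "u \<in> {1..U}"
    have "D u / T \<le> (D u / T) / \<zeta> u" using z[OF u] D[OF u] Tp
      by (simp add: le_divide_eq)
    then show "D u / T \<le> D u / (r u * T) * r u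
      \<and> D u / (r u * T) * r u \<le> (D u / T) / \<zeta> u" using e[OF u] by simp
  qed
  have "P4_feasible U D r \<rho> \<zeta> Btot Rtot Ftot T (\<lambda>u. D u / (r u * T)) (\<lambda>u. D u / T)"
    unfolding P4_feasible_def using Tp pt sB sR pt2 sF F by auto
  then show ?thesis by blast
qed

theorem mainTheorem7:
  fixes U :: nat and D r \<rho> \<zeta> :: "nat \<Rightarrow> real" and Btot Rtot :: real
  assumes "U \<ge> 1"
    and "\<And>u. u \<in> {1..U} \<Longrightarrow> D u > 0"
    and "\<And>u. u \<in> {1..U} \<Longrightarrow> r u > 0"
    and "\<And>u. u \<in> {1..U} \<Longrightarrow> \<rho> u > 0"
    and "\<And>u. u \<in> {1..U} \<Longrightarrow> 0 < \<zeta> u \<and> \<zeta> u < 1"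
    and "Btot > 0" and "Rtot > 0"
  shows "(\<forall>Ftot \<ge> 0. P4_optval U D r \<rho> \<zeta> Btot Rtot Ftot \<ge> T_lim U D r \<zeta> Btot Rtot)
    \<and> (\<forall>Tth. Tth < T_lim U D r \<zeta> Btot Rtot \<longrightarrow>
          \<not> (\<exists>Ftot \<ge> 0. \<exists>T B RS. P4_feasible U D r \<rho> \<zeta> Btot Rtot Ftot T B RS \<and> T \<le> Tth))
    \<and> (\<forall>Tth. Tth \<ge> T_lim U D r \<zeta> Btot Rtot \<longrightarrow>
          F_lim U D r \<rho> \<zeta> Btot Rtot \<ge> 0 \<and>
          P4_optval U D r \<rho> \<zeta> Btot Rtot (F_lim U D r \<rho> \<zeta> Btot Rtot) = T_lim U D r \<zeta> Btot Rtot \<and>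
          T_lim U D r \<zeta> Btot Rtot \<le> Tth \<and>
          (\<forall>Ftot \<ge> F_lim U D r \<rho> \<zeta> Btot Rtot.
              P4_optval U D r \<rho> \<zeta> Btot Rtot Ftot = T_lim U D r \<zeta> Btot Rtot))"
proof -
  let ?TL = "T_lim U D r \<zeta> Btot Rtot"
  let ?FL = "F_lim U D r \<rho> \<zeta> Btot Rtot"
  let ?S = "\<lambda>Ftot. {T. \<exists>B RS. P4_feasible U D r \<rho> \<zeta> Btot Rtot Ftot T B RS}"
  have lb: "\<And>Ftot T B RS. P4_feasible U D r \<rho> \<zeta> Btot Rtot Ftot T B RS \<Longrightarrow> ?TL \<le> T"
    using lowerb assms by metis
  have p1: "P4_optval U D r \<rho> \<zeta> Btot Rtot Ftot \<ge> ?TL" if "Ftot \<ge> 0" for Ftot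
  proof -
    have "?S Ftot \<noteq> {}" using feas0[OF assms(1,2,3,5,6,7) that, where \<rho>=\<rho>] by auto
    then show ?thesis unfolding P4_optval_def
      by (rule cInf_greatest) (use lb in auto)
  qed
  have FL0: "?FL \<ge> 0"
  proof -
    have ne: "1 \<in> {1..U}" using assms(1) by auto
    have "(\<Sum>u=1..U. \<rho> u * D u) \<ge> 0" by (rule sum_nonneg) (use assms(2,4) in \<open>auto intro: less_imp_le\<close>)
    moreover have "(\<Sum>u=1..U. D u / r u) \<ge> 0" by (rule sum_nonneg) (use assms(2,3) in \<open>auto intro: less_imp_le\<close>)
    moreover have "(\<Sum>u=1..U. \<zeta> u * D u) \<ge> 0" by (rule sum_nonneg) (use assms(2,5) in \<open>auto intro: less_imp_le\<close>)
    ultimately show ?thesis unfolding F_lim_def using assms(6,7) by simp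
  qed
  have p3: "P4_optval U D r \<rho> \<zeta> Btot Rtot Ftot = ?TL" if "Ftot \<ge> ?FL" for Ftot
    unfolding P4_optval_def
  proof (rule cInf_eq_minimum)
    show "?TL \<in> ?S Ftot" using feas_point[OF assms that] by blast
  next
    fix x assume "x \<in> ?S Ftot" then show "?TL \<le> x" using lb by auto
  qed
  show ?thesis
  proof (intro conjI allI impI)
    fix Tth assume "Tth < ?TL"
    then show "\<not> (\<exists>Ftot \<ge> 0. \<exists>T B RS. P4_feasible U D r \<rho> \<zeta> Btot Rtot Ftot T B RS \<and> T \<le> Tth)"
      using lb by force
  qed (use p1 FL0 p3 in auto)
qed


end
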